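(* Let $\sigma : S \to A$ and $\tau : T \to A^\perp$ be two backward sequential strategies, where $A$ is a forest (e.g. obtained from arenas). Then the pullback $S \circledast T$ of $\sigma$ and $\tau$ is backward sequential as well.
   Context: $e \rightarrow e'$ denotes immediate causal dependency ($e<e'$ with nothing strictly between). A strategy $\sigma:S\to A$ between event structures with polarities is a map of esps which is courteous (if $s_1 \rightarrow s_2$ with $\mathrm{pol}(s_1)=+$ or $\mathrm{pol}(s_2)=-$ then $\sigma s_1 \rightarrow \sigma s_2$) and receptive. An event structure $S$ is backward sequential if for every $s\in S$, $[s]=\{s'\mid s'\le s\}$ is a total order. The pullback $S\circledast T$ is the event structure of primes $[(s,t)]_x$ of the product stable family $\mathcal{C}(S)\times\mathcal{C}(T)$ restricted to pairs with $\sigma s=\tau t$; in it, $[(s,t)]_x \rightarrow [(s',t')]_x$ implies $s \rightarrow s'$ or $t \rightarrow t'$. *)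

theory Defs
  imports Main
begin

record 'e es =
  ev  :: "'e set"
  leq :: "'e \<Rightarrow> 'e \<Rightarrow> bool"
  con :: "'e set set"

text \<open>An event structure with polarities; True = positive (+), False = negative (-).\<close>
record 'e esp = "'e es" +
  pol :: "'e \<Rightarrow> bool"

definition event_structure :: "('e, 'z) es_scheme \<Rightarrow> bool" where
  "event_structure E \<longleftrightarrow>
     (\<forall>a b. leq E a b \<longrightarrow> a \<in> ev E \<and> b \<in> ev E)
   \<and> (\<forall>a\<in>ev E. leq E a a)
   \<and> (\<forall>a b. leq E a b \<and> leq E b a \<longrightarrow> a = b)
   \<and> (\<forall>a b c. leq E a b \<and> leq E b c \<longrightarrow> leq E a c)
   \<and> (\<forall>a\<in>ev E. finite {b. leq E b a})
   \<and> (\<forall>X\<in>con E. finite X \<and> X \<subseteq> ev E)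
   \<and> {} \<in> con E
   \<and> (\<forall>a\<in>ev E. {a} \<in> con E)
   \<and> (\<forall>X Y. X \<in> con E \<and> Y \<subseteq> X \<longrightarrow> Y \<in> con E)
   \<and> (\<forall>X a b. X \<in> con E \<and> b \<in> X \<and> leq E a b \<longrightarrow> insert a X \<in> con E)"

definition lt :: "('e, 'z) es_scheme \<Rightarrow> 'e \<Rightarrow> 'e \<Rightarrow> bool" where
  "lt E a b \<longleftrightarrow> leq E a b \<and> a \<noteq> b"

definition imm :: "('e, 'z) es_scheme \<Rightarrow> 'e \<Rightarrow> 'e \<Rightarrow> bool" where
  "imm E a b \<longleftrightarrow> lt E a b \<and> \<not> (\<exists>c. lt E a c \<and> lt E c b)"

definition conf :: "('e, 'z) es_scheme \<Rightarrow> 'e set set" where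
  "conf E = {x. finite x \<and> x \<subseteq> ev E \<and> x \<in> con E
                 \<and> (\<forall>a b. b \<in> x \<and> leq E a b \<longrightarrow> a \<in> x)}"

definition dual :: "'e esp \<Rightarrow> 'e esp" where
  "dual A = A\<lparr>pol := (\<lambda>a. \<not> pol A a)\<rparr>"

definition backward_sequential :: "('e, 'z) es_scheme \<Rightarrow> bool" where
  "backward_sequential E \<longleftrightarrow>
     (\<forall>s\<in>ev E. \<forall>s1 s2. leq E s1 s \<and> leq E s2 s \<longrightarrow> leq E s1 s2 \<or> leq E s2 s1)"

definition forest :: "('e, 'z) es_scheme \<Rightarrow> bool" where
  "forest E \<longleftrightarrow>
     (\<forall>a\<in>ev E. \<forall>a1 a2. leq E a1 a \<and> leq E a2 a \<longrightarrow> leq E a1 a2 \<or> leq E a2 a1)"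

definition esp_map :: "('s \<Rightarrow> 'a) \<Rightarrow> 's esp \<Rightarrow> 'a esp \<Rightarrow> bool" where
  "esp_map f S A \<longleftrightarrow>
     (\<forall>s\<in>ev S. f s \<in> ev A)
   \<and> (\<forall>x\<in>conf S. f ` x \<in> conf A \<and> inj_on f x)
   \<and> (\<forall>s\<in>ev S. pol A (f s) = pol S s)"

definition courteous :: "('s \<Rightarrow> 'a) \<Rightarrow> 's esp \<Rightarrow> 'a esp \<Rightarrow> bool" where
  "courteous f S A \<longleftrightarrow>
     (\<forall>s1 s2. imm S s1 s2 \<and> (pol S s1 \<or> \<not> pol S s2) \<longrightarrow> imm A (f s1) (f s2))"

definition receptive :: "('s \<Rightarrow> 'a) \<Rightarrow> 's esp \<Rightarrow> 'a esp \<Rightarrow> bool" where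
  "receptive f S A \<longleftrightarrow>
     (\<forall>x\<in>conf S. \<forall>a. a \<notin> f ` x \<and> insert a (f ` x) \<in> conf A \<and> \<not> pol A a \<longrightarrow>
        (\<exists>!s. s \<notin> x \<and> insert s x \<in> conf S \<and> f s = a))"

definition strategy :: "('s \<Rightarrow> 'a) \<Rightarrow> 's esp \<Rightarrow> 'a esp \<Rightarrow> bool" where
  "strategy f S A \<longleftrightarrow>
     event_structure S \<and> event_structure A \<and> esp_map f S A \<and> courteous f S A \<and> receptive f S A"

text \<open>Configurations of the product stable family \<open>C(S) \<times> C(T)\<close> (Winskel),
  restricted to pairs \<open>(s,t)\<close> with \<open>\<sigma> s = \<tau> t\<close>.\<close>
definition sync_conf ::
  "('s \<Rightarrow> 'a) \<Rightarrow> ('t \<Rightarrow> 'a) \<Rightarrow> 's esp \<Rightarrow> 't esp \<Rightarrow> ('s \<times> 't) set \<Rightarrow> bool" where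
  "sync_conf \<sigma> \<tau> S T z \<longleftrightarrow>
     finite z
   \<and> fst ` z \<in> conf S \<and> snd ` z \<in> conf T
   \<and> inj_on fst z \<and> inj_on snd z
   \<and> (\<forall>p\<in>z. \<sigma> (fst p) = \<tau> (snd p))
   \<and> (\<forall>e\<in>z. \<forall>e'\<in>z. e \<noteq> e' \<longrightarrow>
        (\<exists>y\<subseteq>z. fst ` y \<in> conf S \<and> snd ` y \<in> conf T \<and> (e \<in> y \<longleftrightarrow> e' \<notin> y)))"

definition prime_of ::
  "('s \<Rightarrow> 'a) \<Rightarrow> ('t \<Rightarrow> 'a) \<Rightarrow> 's esp \<Rightarrow> 't esp \<Rightarrow> ('s \<times> 't) set \<Rightarrow> ('s \<times> 't) \<Rightarrow> ('s \<times> 't) set" where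
  "prime_of \<sigma> \<tau> S T z e = \<Inter> {y. sync_conf \<sigma> \<tau> S T y \<and> e \<in> y \<and> y \<subseteq> z}"

definition pb_events ::
  "('s \<Rightarrow> 'a) \<Rightarrow> ('t \<Rightarrow> 'a) \<Rightarrow> 's esp \<Rightarrow> 't esp \<Rightarrow> ('s \<times> 't) set set" where
  "pb_events \<sigma> \<tau> S T = {prime_of \<sigma> \<tau> S T z e | z e. sync_conf \<sigma> \<tau> S T z \<and> e \<in> z}"

definition pullback ::
  "('s \<Rightarrow> 'a) \<Rightarrow> ('t \<Rightarrow> 'a) \<Rightarrow> 's esp \<Rightarrow> 't esp \<Rightarrow> ('s \<times> 't) set es" where
  "pullback \<sigma> \<tau> S T =
     \<lparr> ev = pb_events \<sigma> \<tau> S T,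
       leq = (\<lambda>p q. p \<in> pb_events \<sigma> \<tau> S T \<and> q \<in> pb_events \<sigma> \<tau> S T \<and> p \<subseteq> q),
       con = {X. finite X \<and> X \<subseteq> pb_events \<sigma> \<tau> S T
                 \<and> (\<exists>z. sync_conf \<sigma> \<tau> S T z \<and> \<Union>X \<subseteq> z)} \<rparr>"

end

theory Submission
  imports Defs
begin

definition Rl :: "('s,'x) es_scheme \<Rightarrow> ('t,'y) es_scheme \<Rightarrow> ('p\<Rightarrow>'s) \<Rightarrow> ('p\<Rightarrow>'t) \<Rightarrow> 'p set \<Rightarrow> ('p\<times>'p) set" where
  "Rl S T f g z = {(b,a). b\<in>z \<and> a\<in>z \<and> (leq S (f b) (f a) \<or> leq T (g b) (g a))}"

lemma Rl_swap: "Rl T S g f z = Rl S T f g z"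
  unfolding Rl_def by auto

lemma es_ax1: "event_structure E \<Longrightarrow> \<forall>a b. leq E a b \<longrightarrow> a \<in> ev E \<and> b \<in> ev E"
  unfolding event_structure_def by (elim conjE) assumption
lemma es_ax2: "event_structure E \<Longrightarrow> \<forall>a\<in>ev E. leq E a a"
  unfolding event_structure_def by (elim conjE) assumption
lemma es_ax3: "event_structure E \<Longrightarrow> \<forall>a b. leq E a b \<and> leq E b a \<longrightarrow> a = b"
  unfolding event_structure_def by (elim conjE) assumption
lemma es_ax4: "event_structure E \<Longrightarrow> \<forall>a b c. leq E a b \<and> leq E b c \<longrightarrow> leq E a c"
  unfolding event_structure_def by (elim conjE) assumption
lemma es_ax5: "event_structure E \<Longrightarrow> \<forall>a\<in>ev E. finite {b. leq E b a}"
  unfolding event_structure_def by (elim conjE) assumption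
lemma es_ax6: "event_structure E \<Longrightarrow> \<forall>X\<in>con E. finite X \<and> X \<subseteq> ev E"
  unfolding event_structure_def by (elim conjE) assumption
lemma es_ax7: "event_structure E \<Longrightarrow> {} \<in> con E"
  unfolding event_structure_def by (elim conjE) assumption
lemma es_ax8: "event_structure E \<Longrightarrow> \<forall>a\<in>ev E. {a} \<in> con E"
  unfolding event_structure_def by (elim conjE) assumption
lemma es_ax9: "event_structure E \<Longrightarrow> \<forall>X Y. X \<in> con E \<and> Y \<subseteq> X \<longrightarrow> Y \<in> con E"
  unfolding event_structure_def by (elim conjE) assumption
lemma es_ax10: "event_structure E \<Longrightarrow> \<forall>X a b. X \<in> con E \<and> b \<in> X \<and> leq E a b \<longrightarrow> insert a X \<in> con E"
  unfolding event_structure_def by (elim conjE) assumption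

lemma es_ev: "event_structure E \<Longrightarrow> leq E a b \<Longrightarrow> a \<in> ev E \<and> b \<in> ev E"
  using es_ax1 by blast
lemma es_refl: "event_structure E \<Longrightarrow> a \<in> ev E \<Longrightarrow> leq E a a"
  using es_ax2 by blast
lemma es_antisym: "event_structure E \<Longrightarrow> leq E a b \<Longrightarrow> leq E b a \<Longrightarrow> a = b"
  using es_ax3 by blast
lemma es_trans: "event_structure E \<Longrightarrow> leq E a b \<Longrightarrow> leq E b c \<Longrightarrow> leq E a c"
  using es_ax4 by blast
lemma es_fin: "event_structure E \<Longrightarrow> a \<in> ev E \<Longrightarrow> finite {b. leq E b a}"
  using es_ax5 by blast
lemma es_single: "event_structure E \<Longrightarrow> a \<in> ev E \<Longrightarrow> {a} \<in> con E"
  using es_ax8 by blast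
lemma es_sub: "event_structure E \<Longrightarrow> X \<in> con E \<Longrightarrow> Y \<subseteq> X \<Longrightarrow> Y \<in> con E"
  using es_ax9 by blast
lemma es_ins: "event_structure E \<Longrightarrow> X \<in> con E \<Longrightarrow> b \<in> X \<Longrightarrow> leq E a b \<Longrightarrow> insert a X \<in> con E"
  using es_ax10 by blast

lemma conf_Int:
  assumes "event_structure E" "x\<in>conf E" "y\<in>conf E" shows "x\<inter>y \<in> conf E"
proof -
  have sub: "\<And>X Y. X \<in> con E \<Longrightarrow> Y \<subseteq> X \<Longrightarrow> Y \<in> con E"
    using es_sub[OF assms(1)] by blast
  have "x \<in> con E" using assms(2) unfolding conf_def by simp
  then have "x\<inter>y \<in> con E" using sub by blast
  then show ?thesis using assms(2,3) unfolding conf_def by auto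
qed

lemma downset_conf:
  assumes es: "event_structure E" and s: "s \<in> ev E"
  shows "{x. leq E x s} \<in> conf E"
proof -
  have fin: "finite {x. leq E x s}" using es_fin[OF es s] .
  have single: "{s} \<in> con E" using es_single[OF es s] .
  have ins: "\<And>X a b. X \<in> con E \<Longrightarrow> b \<in> X \<Longrightarrow> leq E a b \<Longrightarrow> insert a X \<in> con E"
    using es_ins[OF es] by blast
  have sub: "\<And>X Y. X \<in> con E \<Longrightarrow> Y \<subseteq> X \<Longrightarrow> Y \<in> con E"
    using es_sub[OF es] by blast
  have "\<forall>Y. finite Y \<longrightarrow> Y \<subseteq> {x. leq E x s} \<longrightarrow> insert s Y \<in> con E"
  proof (intro allI impI)
    fix Y :: "'a set" assume "finite Y" "Y \<subseteq> {x. leq E x s}"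
    then show "insert s Y \<in> con E"
    proof (induction Y rule: finite_induct)
      case empty then show ?case using single by simp
    next
      case (insert y Y)
      then have "insert s Y \<in> con E" "leq E y s" by auto
      then have "insert y (insert s Y) \<in> con E" using ins by blast
      then show ?case by (simp add: insert_commute)
    qed
  qed
  then have "insert s {x. leq E x s} \<in> con E" using fin by blast
  moreover have "insert s {x. leq E x s} = {x. leq E x s}" using es_refl[OF es s] by auto
  ultimately have c: "{x. leq E x s} \<in> con E" by simp
  have "{x. leq E x s} \<subseteq> ev E" using es_ev[OF es] by blast
  moreover have "\<forall>a b. b \<in> {x. leq E x s} \<and> leq E a b \<longrightarrow> a \<in> {x. leq E x s}"
    using es_trans[OF es] by blast
  ultimately show ?thesis unfolding conf_def using fin c by blast
qed

lemma imm_exists: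
  assumes es: "event_structure T" and lt: "lt T b t"
  shows "\<exists>t'. leq T b t' \<and> imm T t' t"
proof -
  define M where "M = {c. leq T b c \<and> lt T c t}"
  define dn where "dn c = {x. leq T x c}" for c
  have tev: "t \<in> ev T" using es_ev[OF es] lt unfolding lt_def by blast
  have finM: "finite M"
    by (rule finite_subset[OF _ es_fin[OF es tev]]) (auto simp: M_def lt_def)
  have bM: "b \<in> M" using es_refl[OF es] es_ev[OF es] lt unfolding M_def lt_def by blast
  define k where "k = Max ((\<lambda>c. card (dn c)) ` M)"
  have "k \<in> (\<lambda>c. card (dn c)) ` M" unfolding k_def using finM bM by (intro Max_in) auto
  then obtain c where cM: "c \<in> M" and ck: "card (dn c) = k" by auto
  have kmax: "\<And>d. d \<in> M \<Longrightarrow> card (dn d) \<le> k" unfolding k_def using finM by auto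
  have "\<not> (\<exists>d. lt T c d \<and> lt T d t)"
  proof
    assume "\<exists>d. lt T c d \<and> lt T d t"
    then obtain d where cd: "lt T c d" and dt: "lt T d t" by blast
    have "leq T b d" using cM cd es_trans[OF es] unfolding M_def lt_def by blast
    then have dM: "d \<in> M" using dt unfolding M_def by blast
    have dev: "d \<in> ev T" using es_ev[OF es] dt unfolding lt_def by blast
    have fd: "finite (dn d)" using es_fin[OF es dev] unfolding dn_def .
    have sub: "dn c \<subseteq> dn d" using es_trans[OF es] cd unfolding dn_def lt_def by blast
    have "c \<in> dn c" using es_refl[OF es] es_ev[OF es] cd unfolding dn_def lt_def by blast
    have "d \<notin> dn c" using es_antisym[OF es] cd unfolding dn_def lt_def by blast
    moreover have "d \<in> dn d" using es_refl[OF es dev] unfolding dn_def by blast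
    ultimately have "dn c \<subset> dn d" using sub by blast
    then have "card (dn c) < card (dn d)" using fd psubset_card_mono by blast
    then show False using kmax[OF dM] ck by simp
  qed
  then have "imm T c t" using cM unfolding imm_def M_def by blast
  then show ?thesis using cM unfolding M_def by blast
qed

lemma chain_max:
  assumes "finite L" "L \<noteq> {}" "\<forall>x\<in>L. \<forall>y\<in>L. leq S x y \<or> leq S y x"
    and tr: "\<And>a b c. leq S a b \<Longrightarrow> leq S b c \<Longrightarrow> leq S a c"
  shows "\<exists>m\<in>L. \<forall>x\<in>L. leq S x m"
  using assms(1,2,3)
proof (induction L rule: finite_ne_induct)
  case (singleton x)
  then show ?case by auto
next
  case (insert x F)
  then obtain m where m: "m \<in> F" "\<forall>y\<in>F. leq S y m" by auto
  have "leq S x m \<or> leq S m x" using insert m by auto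
  then show ?case
  proof
    assume "leq S x m" then show ?thesis using m by auto
  next
    assume "leq S m x" then show ?thesis using m tr insert by blast
  qed
qed

lemma key:
  fixes f :: "'p \<Rightarrow> 's" and g :: "'p \<Rightarrow> 't" and S :: "'s esp" and T :: "'t esp"
    and \<sigma> :: "'s \<Rightarrow> 'a" and \<tau> :: "'t \<Rightarrow> 'a" and A B :: "'a esp"
  assumes esS: "event_structure S" and esT: "event_structure T"
    and injf: "inj_on f z" and injg: "inj_on g z"
    and cf: "f ` z \<in> conf S" and cg: "g ` z \<in> conf T"
    and sync: "\<forall>p\<in>z. \<sigma> (f p) = \<tau> (g p)"
    and mS: "esp_map \<sigma> S A" and mT: "esp_map \<tau> T B"
    and cT: "courteous \<tau> T B"
    and lB: "leq B = leq A"
    and bs: "backward_sequential S"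
    and e: "e \<in> z" and pe: "\<not> pol T (g e)"
  shows "(\<forall>b. (b,e) \<in> Rl S T f g z \<longrightarrow> b = e) \<or>
         (\<exists>e0. (e0,e) \<in> Rl S T f g z \<and> e0 \<noteq> e \<and>
             (\<forall>b. (b,e) \<in> Rl S T f g z \<longrightarrow> b = e \<or> (b,e0) \<in> (Rl S T f g z)\<^sup>*))"
proof -
  let ?R = "Rl S T f g z"
  define s where "s = f e"
  define t where "t = g e"
  have sev: "s \<in> ev S" using cf e unfolding s_def conf_def by auto
  have st: "\<sigma> s = \<tau> t" using sync e by (simp add: s_def t_def)
  have fdc: "\<And>a b. b \<in> f ` z \<Longrightarrow> leq S a b \<Longrightarrow> a \<in> f ` z" using cf unfolding conf_def by blast
  have gdc: "\<And>a b. b \<in> g ` z \<Longrightarrow> leq T a b \<Longrightarrow> a \<in> g ` z" using cg unfolding conf_def by blast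
  have injtau: "inj_on \<tau> (g ` z)" using mT cg unfolding esp_map_def by blast
  have C: "\<And>b. (b,e) \<in> ?R \<Longrightarrow> b = e \<or> (\<exists>bs\<in>z. lt S (f bs) s \<and> (b,bs) \<in> ?R\<^sup>*)"
  proof -
    fix b assume bR: "(b,e) \<in> ?R"
    then have bz: "b \<in> z" and or: "leq S (f b) s \<or> leq T (g b) t"
      unfolding Rl_def s_def t_def by auto
    show "b = e \<or> (\<exists>bs\<in>z. lt S (f bs) s \<and> (b,bs) \<in> ?R\<^sup>*)"
    proof (cases "leq S (f b) s")
      case True
      show ?thesis
      proof (cases "f b = s")
        case True then have "b = e" using injf bz e unfolding s_def inj_on_def by blast
        then show ?thesis by simp
      next
        case False then have "lt S (f b) s" using \<open>leq S (f b) s\<close> unfolding lt_def by simp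
        then show ?thesis using bz by blast
      qed
    next
      case False
      then have lTb: "leq T (g b) t" using or by simp
      show ?thesis
      proof (cases "g b = t")
        case True then have "b = e" using injg bz e unfolding t_def inj_on_def by blast
        then show ?thesis by simp
      next
        case False
        then have "lt T (g b) t" using lTb unfolding lt_def by simp
        then obtain t' where bt': "leq T (g b) t'" and it': "imm T t' t" using imm_exists[OF esT] by blast
        have "imm B (\<tau> t') (\<tau> t)" using cT it' pe unfolding courteous_def t_def by blast
        then have "leq B (\<tau> t') (\<tau> t)" unfolding imm_def lt_def by simp
        then have la: "leq A (\<tau> t') (\<sigma> s)" using lB st by simp
        have X: "{x. leq S x s} \<in> conf S" using downset_conf[OF esS sev] .
        then have "\<sigma> ` {x. leq S x s} \<in> conf A" using mS unfolding esp_map_def by blast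
        moreover have "\<sigma> s \<in> \<sigma> ` {x. leq S x s}" using es_refl[OF esS sev] by blast
        ultimately have "\<tau> t' \<in> \<sigma> ` {x. leq S x s}" using la unfolding conf_def by blast
        then obtain ss where ss: "leq S ss s" "\<sigma> ss = \<tau> t'" by (metis (mono_tags, lifting) imageE mem_Collect_eq)
        have "ss \<in> f ` z" using fdc ss(1) e unfolding s_def by blast
        then obtain bb where bb: "bb \<in> z" "f bb = ss" by blast
        have tz: "t \<in> g ` z" using e unfolding t_def by blast
        have t'z: "t' \<in> g ` z" using gdc[OF tz] it' unfolding imm_def lt_def by blast
        have "\<tau> (g bb) = \<tau> t'" using sync bb ss by metis
        then have gbb: "g bb = t'" using injtau t'z bb(1) unfolding inj_on_def by blast
        have "ss \<noteq> s"
        proof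
          assume "ss = s"
          then have "bb = e" using injf bb e unfolding s_def inj_on_def by blast
          then have "t' = t" using gbb unfolding t_def by simp
          then show False using it' unfolding imm_def lt_def by simp
        qed
        then have "lt S (f bb) s" using ss bb unfolding lt_def by simp
        moreover have "(b,bb) \<in> ?R" using bz bb gbb bt' unfolding Rl_def by auto
        ultimately show ?thesis using bb by blast
      qed
    qed
  qed
  define L where "L = {x. lt S x s}"
  show ?thesis
  proof (cases "L = {}")
    case True
    then show ?thesis using C unfolding L_def by blast
  next
    case False
    have finL: "finite L"
      by (rule finite_subset[OF _ es_fin[OF esS sev]]) (auto simp: L_def lt_def)
    have tot: "\<forall>x\<in>L. \<forall>y\<in>L. leq S x y \<or> leq S y x"
      using bs sev unfolding L_def lt_def backward_sequential_def by blast
    have tr: "\<And>a b c. leq S a b \<Longrightarrow> leq S b c \<Longrightarrow> leq S a c"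
      by (rule es_trans[OF esS])
    obtain s0 where s0: "s0 \<in> L" "\<forall>x\<in>L. leq S x s0"
    proof -
      have Lne: "L \<noteq> {}" using False .
      have "\<exists>m\<in>L. \<forall>x\<in>L. leq S x m" by (rule chain_max[of L S, OF finL Lne tot tr])
      then show ?thesis using that by blast
    qed
    have "s0 \<in> f ` z" using fdc s0(1) e unfolding L_def lt_def s_def by blast
    then obtain e0 where e0: "e0 \<in> z" "f e0 = s0" by blast
    have ne: "e0 \<noteq> e" using e0 s0 unfolding L_def lt_def s_def by auto
    have e0R: "(e0,e) \<in> ?R" using e0 e s0 unfolding Rl_def L_def lt_def s_def by auto
    have "\<forall>b. (b,e) \<in> ?R \<longrightarrow> b = e \<or> (b,e0) \<in> ?R\<^sup>*"
    proof (intro allI impI)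
      fix b assume "(b,e) \<in> ?R"
      from C[OF this] show "b = e \<or> (b,e0) \<in> ?R\<^sup>*"
      proof
        assume "\<exists>bs\<in>z. lt S (f bs) s \<and> (b,bs) \<in> ?R\<^sup>*"
        then obtain bb where bb: "bb \<in> z" "lt S (f bb) s" "(b,bb) \<in> ?R\<^sup>*" by blast
        have "leq S (f bb) (f e0)" using s0 bb e0 unfolding L_def by auto
        then have "(bb,e0) \<in> ?R" using bb e0 unfolding Rl_def by auto
        with bb(3) have "(b,e0) \<in> ?R\<^sup>*" by (rule rtrancl_into_rtrancl)
        then show ?thesis by simp
      qed simp
    qed
    then show ?thesis using e0R ne by blast
  qed
qed

lemma sc1: "sync_conf \<sigma> \<tau> S T z \<Longrightarrow> finite z"
  unfolding sync_conf_def by (elim conjE) assumption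
lemma sc2: "sync_conf \<sigma> \<tau> S T z \<Longrightarrow> fst ` z \<in> conf S"
  unfolding sync_conf_def by (elim conjE) assumption
lemma sc3: "sync_conf \<sigma> \<tau> S T z \<Longrightarrow> snd ` z \<in> conf T"
  unfolding sync_conf_def by (elim conjE) assumption
lemma sc4: "sync_conf \<sigma> \<tau> S T z \<Longrightarrow> inj_on fst z"
  unfolding sync_conf_def by (elim conjE) assumption
lemma sc5: "sync_conf \<sigma> \<tau> S T z \<Longrightarrow> inj_on snd z"
  unfolding sync_conf_def by (elim conjE) assumption
lemma sc6: "sync_conf \<sigma> \<tau> S T z \<Longrightarrow> \<forall>p\<in>z. \<sigma> (fst p) = \<tau> (snd p)"
  unfolding sync_conf_def by (elim conjE) assumption
lemma sc7: "sync_conf \<sigma> \<tau> S T z \<Longrightarrow> \<forall>e\<in>z. \<forall>e'\<in>z. e \<noteq> e' \<longrightarrow> (\<exists>y\<subseteq>z. fst ` y \<in> conf S \<and> snd ` y \<in> conf T \<and> (e \<in> y \<longleftrightarrow> e' \<notin> y))"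
  unfolding sync_conf_def by (elim conjE) assumption

lemma sc_intro:
  "finite z \<Longrightarrow> fst ` z \<in> conf S \<Longrightarrow> snd ` z \<in> conf T \<Longrightarrow> inj_on fst z \<Longrightarrow> inj_on snd z
   \<Longrightarrow> (\<forall>p\<in>z. \<sigma> (fst p) = \<tau> (snd p))
   \<Longrightarrow> (\<forall>e\<in>z. \<forall>e'\<in>z. e \<noteq> e' \<longrightarrow> (\<exists>y\<subseteq>z. fst ` y \<in> conf S \<and> snd ` y \<in> conf T \<and> (e \<in> y \<longleftrightarrow> e' \<notin> y)))
   \<Longrightarrow> sync_conf \<sigma> \<tau> S T z"
  unfolding sync_conf_def by (intro conjI)

lemma sub_sync:
  assumes esS: "event_structure S" and esT: "event_structure T"
    and z: "sync_conf \<sigma> \<tau> S T z" and wz: "w \<subseteq> z"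
    and cw1: "fst ` w \<in> conf S" and cw2: "snd ` w \<in> conf T"
  shows "sync_conf \<sigma> \<tau> S T w"
proof (rule sc_intro)
  show "finite w" using sc1[OF z] wz finite_subset by blast
  show "fst ` w \<in> conf S" "snd ` w \<in> conf T" by fact+
  show "inj_on fst w" using sc4[OF z] wz inj_on_subset by blast
  show "inj_on snd w" using sc5[OF z] wz inj_on_subset by blast
  show "\<forall>p\<in>w. \<sigma> (fst p) = \<tau> (snd p)" using sc6[OF z] wz by (meson subsetD)
  show "\<forall>e\<in>w. \<forall>e'\<in>w. e \<noteq> e' \<longrightarrow> (\<exists>y\<subseteq>w. fst ` y \<in> conf S \<and> snd ` y \<in> conf T \<and> (e \<in> y \<longleftrightarrow> e' \<notin> y))"
  proof (intro ballI impI)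
    fix e e' assume e: "e \<in> w" and e': "e' \<in> w" and ne: "e \<noteq> e'"
    have ez: "e \<in> z" and e'z: "e' \<in> z" using e e' wz by auto
    obtain y where y: "y \<subseteq> z" "fst ` y \<in> conf S" "snd ` y \<in> conf T" "e \<in> y \<longleftrightarrow> e' \<notin> y"
      using sc7[OF z, rule_format, OF ez e'z ne] by (elim exE conjE) simp
    have "fst ` (y \<inter> w) = fst ` y \<inter> fst ` w" using inj_on_image_Int[OF sc4[OF z] y(1) wz] .
    then have c1: "fst ` (y \<inter> w) \<in> conf S" using conf_Int[OF esS y(2) cw1] by simp
    have "snd ` (y \<inter> w) = snd ` y \<inter> snd ` w" using inj_on_image_Int[OF sc5[OF z] y(1) wz] .
    then have c2: "snd ` (y \<inter> w) \<in> conf T" using conf_Int[OF esT y(3) cw2] by simp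
    show "\<exists>y\<subseteq>w. fst ` y \<in> conf S \<and> snd ` y \<in> conf T \<and> (e \<in> y \<longleftrightarrow> e' \<notin> y)"
    proof (intro exI conjI)
      show "y \<inter> w \<subseteq> w" by blast
      show "fst ` (y \<inter> w) \<in> conf S" by (rule c1)
      show "snd ` (y \<inter> w) \<in> conf T" by (rule c2)
      show "e \<in> y \<inter> w \<longleftrightarrow> e' \<notin> y \<inter> w" using y(4) e e' by simp
    qed
  qed
qed

definition Dn :: "('s,'x) es_scheme \<Rightarrow> ('t,'y) es_scheme \<Rightarrow> ('s\<times>'t) set \<Rightarrow> ('s\<times>'t) \<Rightarrow> ('s\<times>'t) set" where
  "Dn S T z e = {b. (b,e) \<in> (Rl S T fst snd z)\<^sup>*}"

lemma Rl_in: "(b,a) \<in> Rl S T f g z \<Longrightarrow> b \<in> z \<and> a \<in> z"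
  unfolding Rl_def by auto

lemma Dn_self: "e \<in> Dn S T z e" unfolding Dn_def by simp

lemma Dn_sub: assumes "e \<in> z" shows "Dn S T z e \<subseteq> z"
proof
  fix b assume "b \<in> Dn S T z e"
  then have "(b,e) \<in> (Rl S T fst snd z)\<^sup>*" unfolding Dn_def by simp
  then show "b \<in> z"
  proof (cases rule: converse_rtranclE)
    case base then show ?thesis using assms by simp
  next
    case (step c) then show ?thesis using Rl_in by metis
  qed
qed

lemma Dn_trans: "a \<in> Dn S T z b \<Longrightarrow> Dn S T z a \<subseteq> Dn S T z b"
  unfolding Dn_def by (auto intro: rtrancl_trans)

lemma Dn_step: "(a,b) \<in> Rl S T fst snd z \<Longrightarrow> b \<in> Dn S T z c \<Longrightarrow> a \<in> Dn S T z c"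
  unfolding Dn_def by (auto intro: converse_rtrancl_into_rtrancl)

lemma conf_downD: "x \<in> conf E \<Longrightarrow> b \<in> x \<Longrightarrow> leq E a b \<Longrightarrow> a \<in> x"
  unfolding conf_def by blast
lemma conf_con: "x \<in> conf E \<Longrightarrow> x \<in> con E"
  unfolding conf_def by blast
lemma conf_ev: "x \<in> conf E \<Longrightarrow> x \<subseteq> ev E"
  unfolding conf_def by blast
lemma conf_intro: "finite x \<Longrightarrow> x \<subseteq> ev E \<Longrightarrow> x \<in> con E \<Longrightarrow> (\<And>a b. b \<in> x \<Longrightarrow> leq E a b \<Longrightarrow> a \<in> x) \<Longrightarrow> x \<in> conf E"
  unfolding conf_def by blast

lemma Dn_conf1:
  assumes esS: "event_structure S" and z: "sync_conf \<sigma> \<tau> S T z" and e: "e \<in> z"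
  shows "fst ` Dn S T z e \<in> conf S"
proof -
  have sub: "Dn S T z e \<subseteq> z" using Dn_sub[OF e] .
  have cz: "fst ` z \<in> conf S" using sc2[OF z] .
  have imsub: "fst ` Dn S T z e \<subseteq> fst ` z" using sub by (rule image_mono)
  have fin: "finite (fst ` Dn S T z e)" using sc1[OF z] sub finite_subset by blast
  have ev: "fst ` Dn S T z e \<subseteq> ev S" using conf_ev[OF cz] imsub by (rule order_trans[rotated])
  have con: "fst ` Dn S T z e \<in> con S" using es_sub[OF esS conf_con[OF cz] imsub] .
  show ?thesis
  proof (rule conf_intro[OF fin ev con])
    fix a b assume b: "b \<in> fst ` Dn S T z e" and ab: "leq S a b"
    then obtain d where d: "d \<in> Dn S T z e" "b = fst d" by blast
    have dz: "d \<in> z" using d(1) sub by (rule subsetD[rotated])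
    have "b \<in> fst ` z" using d dz by simp
    then have "a \<in> fst ` z" using conf_downD[OF cz _ ab] by simp
    then obtain c where c: "c \<in> z" "a = fst c" by blast
    have "leq S (fst c) (fst d)" using ab c d by simp
    then have "(c,d) \<in> Rl S T fst snd z" using c(1) dz unfolding Rl_def by simp
    then have "c \<in> Dn S T z e" using Dn_step d(1) by metis
    then show "a \<in> fst ` Dn S T z e" using c by simp
  qed
qed

lemma Dn_conf2:
  assumes esT: "event_structure T" and z: "sync_conf \<sigma> \<tau> S T z" and e: "e \<in> z"
  shows "snd ` Dn S T z e \<in> conf T"
proof -
  have sub: "Dn S T z e \<subseteq> z" using Dn_sub[OF e] .
  have cz: "snd ` z \<in> conf T" using sc3[OF z] .
  have imsub: "snd ` Dn S T z e \<subseteq> snd ` z" using sub by (rule image_mono)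
  have fin: "finite (snd ` Dn S T z e)" using sc1[OF z] sub finite_subset by blast
  have ev: "snd ` Dn S T z e \<subseteq> ev T" using conf_ev[OF cz] imsub by (rule order_trans[rotated])
  have con: "snd ` Dn S T z e \<in> con T" using es_sub[OF esT conf_con[OF cz] imsub] .
  show ?thesis
  proof (rule conf_intro[OF fin ev con])
    fix a b assume b: "b \<in> snd ` Dn S T z e" and ab: "leq T a b"
    then obtain d where d: "d \<in> Dn S T z e" "b = snd d" by blast
    have dz: "d \<in> z" using d(1) sub by (rule subsetD[rotated])
    have "b \<in> snd ` z" using d dz by simp
    then have "a \<in> snd ` z" using conf_downD[OF cz _ ab] by simp
    then obtain c where c: "c \<in> z" "a = snd c" by blast
    have "leq T (snd c) (snd d)" using ab c d by simp
    then have "(c,d) \<in> Rl S T fst snd z" using c(1) dz unfolding Rl_def by simp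
    then have "c \<in> Dn S T z e" using Dn_step d(1) by metis
    then show "a \<in> snd ` Dn S T z e" using c by simp
  qed
qed

lemma Dn_sync:
  assumes esS: "event_structure S" and esT: "event_structure T"
    and z: "sync_conf \<sigma> \<tau> S T z" and e: "e \<in> z"
  shows "sync_conf \<sigma> \<tau> S T (Dn S T z e)"
  using sub_sync[OF esS esT z Dn_sub[OF e] Dn_conf1[OF esS z e] Dn_conf2[OF esT z e]] .

lemma Dn_least:
  assumes z: "sync_conf \<sigma> \<tau> S T z" and y: "sync_conf \<sigma> \<tau> S T y" and yz: "y \<subseteq> z" and ey: "e \<in> y"
  shows "Dn S T z e \<subseteq> y"
proof
  fix b assume "b \<in> Dn S T z e"
  then have "(b,e) \<in> (Rl S T fst snd z)\<^sup>*" unfolding Dn_def by simp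
  then show "b \<in> y"
  proof (induction rule: converse_rtrancl_induct)
    case base then show ?case using ey .
  next
    case (step b c)
    have bz: "b \<in> z" and cz: "c \<in> z" using Rl_in[OF step(1)] by auto
    have or: "leq S (fst b) (fst c) \<or> leq T (snd b) (snd c)" using step(1) unfolding Rl_def by auto
    then show ?case
    proof
      assume l: "leq S (fst b) (fst c)"
      have "fst c \<in> fst ` y" using step(3) by blast
      then have "fst b \<in> fst ` y" using sc2[OF y] l unfolding conf_def by blast
      then obtain w where w: "w \<in> y" "fst w = fst b" by force
      then have "w = b" using sc4[OF z] yz bz unfolding inj_on_def by blast
      then show ?thesis using w by simp
    next
      assume l: "leq T (snd b) (snd c)"
      have "snd c \<in> snd ` y" using step(3) by blast
      then have "snd b \<in> snd ` y" using sc3[OF y] l unfolding conf_def by blast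
      then obtain w where w: "w \<in> y" "snd w = snd b" by force
      then have "w = b" using sc5[OF z] yz bz unfolding inj_on_def by blast
      then show ?thesis using w by simp
    qed
  qed
qed

lemma prime_Dn:
  assumes esS: "event_structure S" and esT: "event_structure T"
    and z: "sync_conf \<sigma> \<tau> S T z" and e: "e \<in> z"
  shows "prime_of \<sigma> \<tau> S T z e = Dn S T z e"
proof
  show "prime_of \<sigma> \<tau> S T z e \<subseteq> Dn S T z e"
    unfolding prime_of_def
    by (rule Inter_lower) (use Dn_sync[OF esS esT z e] Dn_self[of e S T z] Dn_sub[OF e] in blast)
  show "Dn S T z e \<subseteq> prime_of \<sigma> \<tau> S T z e"
    unfolding prime_of_def
    by (rule Inter_greatest) (use Dn_least[OF z] in blast)
qed

lemma Dn_mono_eq: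
  assumes esS: "event_structure S" and esT: "event_structure T"
    and z: "sync_conf \<sigma> \<tau> S T z" and w: "sync_conf \<sigma> \<tau> S T w" and wz: "w \<subseteq> z" and e: "e \<in> w"
  shows "Dn S T w e = Dn S T z e"
proof
  have "Rl S T fst snd w \<subseteq> Rl S T fst snd z" using wz unfolding Rl_def by auto
  then show "Dn S T w e \<subseteq> Dn S T z e" unfolding Dn_def using rtrancl_mono by blast
  have "sync_conf \<sigma> \<tau> S T (Dn S T w e)" using Dn_sync[OF esS esT w e] .
  moreover have "Dn S T w e \<subseteq> z" using Dn_sub[OF e] wz by blast
  ultimately show "Dn S T z e \<subseteq> Dn S T w e" using Dn_least[OF z] Dn_self by metis
qed

lemma Dn_antisym:
  assumes esS: "event_structure S" and esT: "event_structure T"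
    and z: "sync_conf \<sigma> \<tau> S T z" and a: "a \<in> z" and b: "b \<in> z"
    and ab: "a \<in> Dn S T z b" and ba: "b \<in> Dn S T z a"
  shows "a = b"
proof (rule ccontr)
  assume ne: "a \<noteq> b"
  obtain y where y: "y \<subseteq> z" "fst ` y \<in> conf S" "snd ` y \<in> conf T" "a \<in> y \<longleftrightarrow> b \<notin> y"
    using sc7[OF z] a b ne by blast
  have sy: "sync_conf \<sigma> \<tau> S T y" using sub_sync[OF esS esT z y(1-3)] .
  show False
  proof (cases "a \<in> y")
    case True
    then have "Dn S T z a \<subseteq> y" using Dn_least[OF z sy y(1)] by blast
    then show False using ba True y(4) by blast
  next
    case False
    then have "b \<in> y" using y(4) by blast
    then have "Dn S T z b \<subseteq> y" using Dn_least[OF z sy y(1)] by blast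
    then show False using ab False by blast
  qed
qed

lemma st1: "strategy f S A \<Longrightarrow> event_structure S"
  unfolding strategy_def by (elim conjE) assumption
lemma st3: "strategy f S A \<Longrightarrow> esp_map f S A"
  unfolding strategy_def by (elim conjE) assumption
lemma st4: "strategy f S A \<Longrightarrow> courteous f S A"
  unfolding strategy_def by (elim conjE) assumption

lemma em_pol: "esp_map f S A \<Longrightarrow> s \<in> ev S \<Longrightarrow> pol A (f s) = pol S s"
  unfolding esp_map_def by (elim conjE) (erule bspec)

lemma step_lemma:
  fixes \<sigma> :: "'s \<Rightarrow> 'a" and \<tau> :: "'t \<Rightarrow> 'a"
    and S :: "'s esp" and T :: "'t esp" and A :: "'a esp"
  assumes sS: "strategy \<sigma> S A" and sT: "strategy \<tau> T (dual A)"
    and bS: "backward_sequential S" and bT: "backward_sequential T"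
    and z: "sync_conf \<sigma> \<tau> S T z" and e: "e \<in> z"
  shows "(\<forall>b. (b,e) \<in> Rl S T fst snd z \<longrightarrow> b = e) \<or>
         (\<exists>e0. (e0,e) \<in> Rl S T fst snd z \<and> e0 \<noteq> e \<and>
             (\<forall>b. (b,e) \<in> Rl S T fst snd z \<longrightarrow> b = e \<or> (b,e0) \<in> (Rl S T fst snd z)\<^sup>*))"
proof -
  have esS: "event_structure S" using st1[OF sS] .
  have esT: "event_structure T" using st1[OF sT] .
  have mS: "esp_map \<sigma> S A" using st3[OF sS] .
  have mT: "esp_map \<tau> T (dual A)" using st3[OF sT] .
  have cS: "courteous \<sigma> S A" using st4[OF sS] .
  have cT: "courteous \<tau> T (dual A)" using st4[OF sT] .
  have ld: "leq (dual A) = leq A" by (simp add: dual_def)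
  have syn: "\<forall>p\<in>z. \<sigma> (fst p) = \<tau> (snd p)" using sc6[OF z] .
  have sev: "fst e \<in> ev S" using conf_ev[OF sc2[OF z]] e by blast
  have tev: "snd e \<in> ev T" using conf_ev[OF sc3[OF z]] e by blast
  have p1: "pol A (\<sigma> (fst e)) = pol S (fst e)" using em_pol[OF mS sev] .
  have p2: "pol (dual A) (\<tau> (snd e)) = pol T (snd e)" using em_pol[OF mT tev] .
  have eq: "\<sigma> (fst e) = \<tau> (snd e)" using bspec[OF syn e] by simp
  have pol: "pol T (snd e) = (\<not> pol S (fst e))" using p1 p2 eq by (simp add: dual_def)
  show ?thesis
  proof (cases "pol S (fst e)")
    case True
    then have pe: "\<not> pol T (snd e)" using pol by simp
    show ?thesis
      by (rule key[OF esS esT sc4[OF z] sc5[OF z] sc2[OF z] sc3[OF z] syn mS mT cT ld bS e pe])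
  next
    case False
    have pe': "\<not> pol S (fst e)" using False .
    have syn': "\<forall>p\<in>z. \<tau> (snd p) = \<sigma> (fst p)" using syn by simp
    have "(\<forall>b. (b,e) \<in> Rl T S snd fst z \<longrightarrow> b = e) \<or>
         (\<exists>e0. (e0,e) \<in> Rl T S snd fst z \<and> e0 \<noteq> e \<and>
             (\<forall>b. (b,e) \<in> Rl T S snd fst z \<longrightarrow> b = e \<or> (b,e0) \<in> (Rl T S snd fst z)\<^sup>*))"
      by (rule key[OF esT esS sc5[OF z] sc4[OF z] sc3[OF z] sc2[OF z] syn' mT mS cS ld[symmetric] bT e pe'])
    then show ?thesis unfolding Rl_swap[of T S snd fst z] .
  qed
qed

lemma chain_lemma:
  fixes \<sigma> :: "'s \<Rightarrow> 'a" and \<tau> :: "'t \<Rightarrow> 'a"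
    and S :: "'s esp" and T :: "'t esp" and A :: "'a esp"
  assumes sS: "strategy \<sigma> S A" and sT: "strategy \<tau> T (dual A)"
    and bS: "backward_sequential S" and bT: "backward_sequential T"
    and z: "sync_conf \<sigma> \<tau> S T z"
  shows "e \<in> z \<Longrightarrow> e1 \<in> Dn S T z e \<Longrightarrow> e2 \<in> Dn S T z e \<Longrightarrow> e1 \<in> Dn S T z e2 \<or> e2 \<in> Dn S T z e1"
proof (induction "card (Dn S T z e)" arbitrary: e e1 e2 rule: less_induct)
  case less
  let ?R = "Rl S T fst snd z"
  have esS: "event_structure S" using st1[OF sS] .
  have esT: "event_structure T" using st1[OF sT] .
  note st = step_lemma[OF sS sT bS bT z less.prems(1)]
  show ?case
  proof (cases "\<forall>b. (b,e) \<in> ?R \<longrightarrow> b = e")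
    case True
    have "\<And>b. b \<in> Dn S T z e \<Longrightarrow> b = e"
    proof -
      fix b assume "b \<in> Dn S T z e"
      then have "(b,e) \<in> ?R\<^sup>*" unfolding Dn_def by simp
      then show "b = e"
      proof (induction rule: converse_rtrancl_induct)
        case base then show ?case by simp
      next
        case (step b c)
        then have "(b,e) \<in> ?R" by simp
        then show ?case using True by blast
      qed
    qed
    then have "e1 = e" "e2 = e" using less.prems by auto
    then show ?thesis using Dn_self by metis
  next
    case False
    then obtain e0 where e0: "(e0,e) \<in> ?R" "e0 \<noteq> e"
      and pred: "\<forall>b. (b,e) \<in> ?R \<longrightarrow> b = e \<or> (b,e0) \<in> ?R\<^sup>*" using st by blast
    have e0z: "e0 \<in> z" using Rl_in[OF e0(1)] by simp
    have e0D: "e0 \<in> Dn S T z e" using Dn_step[OF e0(1) Dn_self] .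
    have sub1: "Dn S T z e0 \<subseteq> Dn S T z e" using Dn_trans[OF e0D] .
    have sub2: "Dn S T z e \<subseteq> insert e (Dn S T z e0)"
    proof
      fix b assume "b \<in> Dn S T z e"
      then have "(b,e) \<in> ?R\<^sup>*" unfolding Dn_def by simp
      then show "b \<in> insert e (Dn S T z e0)"
      proof (induction rule: converse_rtrancl_induct)
        case base then show ?case by simp
      next
        case (step b c)
        show ?case
        proof (cases "c = e")
          case True
          then have "(b,e) \<in> ?R" using step(1) by simp
          then have "b = e \<or> (b,e0) \<in> ?R\<^sup>*" by (rule pred[rule_format])
          then show ?thesis unfolding Dn_def by simp
        next
          case False
          then have "c \<in> Dn S T z e0" using step(3) by simp
          then have "b \<in> Dn S T z e0" using Dn_step[OF step(1)] by simp
          then show ?thesis by simp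
        qed
      qed
    qed
    have eD0: "e \<notin> Dn S T z e0"
    proof
      assume "e \<in> Dn S T z e0"
      then have "e = e0" using Dn_antisym[OF esS esT z less.prems(1) e0z _ e0D] by simp
      then show False using e0(2) by simp
    qed
    have fin: "finite (Dn S T z e)" using sc1[OF z] Dn_sub[OF less.prems(1)] finite_subset by blast
    have "Dn S T z e0 \<subset> Dn S T z e" using sub1 eD0 Dn_self[of e S T z] by blast
    then have lt: "card (Dn S T z e0) < card (Dn S T z e)" using fin psubset_card_mono by blast
    note IH = less.hyps[OF lt e0z]
    have m1: "e1 \<in> insert e (Dn S T z e0)" and m2: "e2 \<in> insert e (Dn S T z e0)"
      using sub2 less.prems by auto
    show ?thesis
    proof (cases "e1 = e")
      case True then show ?thesis using less.prems(3) by simp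
    next
      case f1: False
      show ?thesis
      proof (cases "e2 = e")
        case True then show ?thesis using less.prems(2) by simp
      next
        case False
        then show ?thesis using IH m1 m2 f1 by simp
      qed
    qed
  qed
qed

lemma prime_is_Dn:
  fixes \<sigma> :: "'s \<Rightarrow> 'a" and \<tau> :: "'t \<Rightarrow> 'a"
    and S :: "'s esp" and T :: "'t esp"
  assumes esS: "event_structure S" and esT: "event_structure T"
    and z: "sync_conf \<sigma> \<tau> S T z" and e: "e \<in> z"
    and z1: "sync_conf \<sigma> \<tau> S T z1" and e1: "e1 \<in> z1"
    and sub: "prime_of \<sigma> \<tau> S T z1 e1 \<subseteq> prime_of \<sigma> \<tau> S T z e"
  shows "prime_of \<sigma> \<tau> S T z1 e1 = Dn S T z e1 \<and> e1 \<in> Dn S T z e"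
proof -
  define q where "q = Dn S T z1 e1"
  have q: "prime_of \<sigma> \<tau> S T z1 e1 = q" unfolding q_def using prime_Dn[OF esS esT z1 e1] .
  have p: "prime_of \<sigma> \<tau> S T z e = Dn S T z e" using prime_Dn[OF esS esT z e] .
  have sq: "sync_conf \<sigma> \<tau> S T q" unfolding q_def using Dn_sync[OF esS esT z1 e1] .
  have qz: "q \<subseteq> z" using sub q p Dn_sub[OF e] by blast
  have qz1: "q \<subseteq> z1" unfolding q_def using Dn_sub[OF e1] .
  have e1q: "e1 \<in> q" unfolding q_def using Dn_self .
  have a: "Dn S T q e1 = Dn S T z e1" using Dn_mono_eq[OF esS esT z sq qz e1q] .
  have b: "Dn S T q e1 = Dn S T z1 e1" using Dn_mono_eq[OF esS esT z1 sq qz1 e1q] .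
  have "q = Dn S T z e1" using a b unfolding q_def by simp
  moreover have "e1 \<in> Dn S T z e" using sub q p e1q by blast
  ultimately show ?thesis using q by simp
qed

theorem mainTheorem12:
  fixes \<sigma> :: "'s \<Rightarrow> 'a" and \<tau> :: "'t \<Rightarrow> 'a"
    and S :: "'s esp" and T :: "'t esp" and A :: "'a esp"
  assumes "event_structure A"
    and "forest A"
    and "strategy \<sigma> S A"
    and "strategy \<tau> T (dual A)"
    and "backward_sequential S"
    and "backward_sequential T"
  shows "backward_sequential (pullback \<sigma> \<tau> S T)"
  unfolding backward_sequential_def
proof (intro ballI allI impI)
  have esS: "event_structure S" using st1[OF assms(3)] .
  have esT: "event_structure T" using st1[OF assms(4)] .
  fix p q1 q2
  assume pev: "p \<in> ev (pullback \<sigma> \<tau> S T)"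
    and le: "leq (pullback \<sigma> \<tau> S T) q1 p \<and> leq (pullback \<sigma> \<tau> S T) q2 p"
  have P: "p \<in> pb_events \<sigma> \<tau> S T" using pev by (simp add: pullback_def)
  have Q1: "q1 \<in> pb_events \<sigma> \<tau> S T" "q1 \<subseteq> p" and Q2: "q2 \<in> pb_events \<sigma> \<tau> S T" "q2 \<subseteq> p"
    using le by (simp_all add: pullback_def)
  obtain z e where z: "sync_conf \<sigma> \<tau> S T z" "e \<in> z" "p = prime_of \<sigma> \<tau> S T z e"
    using P unfolding pb_events_def by blast
  obtain z1 e1 where z1: "sync_conf \<sigma> \<tau> S T z1" "e1 \<in> z1" "q1 = prime_of \<sigma> \<tau> S T z1 e1"
    using Q1(1) unfolding pb_events_def by blast
  obtain z2 e2 where z2: "sync_conf \<sigma> \<tau> S T z2" "e2 \<in> z2" "q2 = prime_of \<sigma> \<tau> S T z2 e2"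
    using Q2(1) unfolding pb_events_def by blast
  have r1: "q1 = Dn S T z e1 \<and> e1 \<in> Dn S T z e"
    using prime_is_Dn[OF esS esT z(1,2) z1(1,2)] Q1(2) z(3) z1(3) by simp
  have r2: "q2 = Dn S T z e2 \<and> e2 \<in> Dn S T z e"
    using prime_is_Dn[OF esS esT z(1,2) z2(1,2)] Q2(2) z(3) z2(3) by simp
  have "e1 \<in> Dn S T z e2 \<or> e2 \<in> Dn S T z e1"
    using chain_lemma[OF assms(3,4,5,6) z(1) z(2)] r1 r2 by blast
  then have "q1 \<subseteq> q2 \<or> q2 \<subseteq> q1" using r1 r2 Dn_trans by metis
  then show "leq (pullback \<sigma> \<tau> S T) q1 q2 \<or> leq (pullback \<sigma> \<tau> S T) q2 q1"
    using Q1(1) Q2(1) by (simp add: pullback_def)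
qed

end
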